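(* Let $G=(\mathcal V,\mathcal E)$, $\chi$, $C$, $2\le m\le n$ and $\mathbb L_m$ be as in the context. Let $\mathcal R_1=\max_{\Gamma\in\mathbb L_m}\|\Gamma\|_1$, $\mathcal R_H=\max_{\Gamma,\Gamma'\in\mathbb L_m}\big(H(\Gamma)-H(\Gamma')\big)$, let $\mathcal V_m$ be the set of vertices of $\mathbb L_m$, let $\mathcal V_m^*\subseteq\mathcal V_m$ be the set of vertices minimizing $\langle C,\cdot\rangle$ over $\mathbb L_m$, and let $\Delta=\min_{V_1\in\mathcal V_m\setminus\mathcal V_m^*,\,V_2\in\mathcal V_m^*}\big(\langle C,V_1\rangle-\langle C,V_2\rangle\big)$. Suppose $\mathbb L_m$ is tight and $|\mathcal V_m^*|=1$. If $\eta\ge \frac{2\mathcal R_1\log(64\mathcal R_1)+2\mathcal R_1+2\mathcal R_H}{\Delta}$, then the rounded assignment $x\in\chi^n$ given by $x_i=\arg\max_{x'\in\chi}(\Gamma_\eta^* )_i(x')$ for each $i\in\mathcal V$ is a MAP assignment, i.e. it maximizes $\sum_{i\in\mathcal V}\theta_i(x_i)+\sum_{ij\in\mathcal E}\theta_{ij}(x_i,x_j)$ over $\chi^n$.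
   Context: A pairwise graphical model has vertex set $\mathcal V=\{1,\dots,n\}$, edge set $\mathcal E$ (each vertex lies on at least one edge), and state set $\chi=\{0,\dots,d-1\}$, with potentials $\theta_i:\chi\to\mathbb R$ ($i\in\mathcal V$) and $\theta_{ij}:\chi^2\to\mathbb R$ ($ij\in\mathcal E$). The cost is $C=-\theta$. For $2\le m\le n$, the Sherali–Adams polytope $\mathbb L_m$ is the set of collections $\Gamma=(\Gamma_S)_{S\subseteq\mathcal V,\,1\le|S|\le m}$ of nonnegative functions $\Gamma_S:\chi^S\to[0,\infty)$, each summing to $1$, such that for $S\subset T$ marginalizing $\Gamma_T$ over the variables in $T\setminus S$ gives $\Gamma_S$; write $\Gamma_i=\Gamma_{\{i\}}$ and $\Gamma_{ij}(x_i,x_j)=\Gamma_{\{i,j\}}(x_i,x_j)$. The cost $C$ is extended to all coordinates with value $0$ on subsets that are neither singletons nor edges, and $\langle C,\Gamma\rangle=\sum_i\sum_{x}C_i(x)\Gamma_i(x)+\sum_{ij\in\mathcal E}\sum_{x_i,x_j}C_{ij}(x_i,x_j)\Gamma_{ij}(x_i,x_j)$. $\|\Gamma\|_1$ is the sum of absolute values of all entries. The entropy is $H(\Gamma)=\sum(\Gamma(-\log\Gamma+1))$ summed over all entries. For $\eta>0$, $\Gamma_\eta^*$ denotes the minimizer of $\langle C,\Gamma\rangle-\frac1\eta H(\Gamma)$ over $\Gamma\in\mathbb L_m$. $\mathbb L_m$ is called tight if the linear program $\max_{\Gamma\in\mathbb L_m}\langle\theta,\Gamma\rangle$ has an integral (all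 entries in $\{0,1\}$) optimal solution. *)

theory Defs
  imports Complex_Main "HOL-Library.FuncSet"
begin

text \<open>Vertices are 0..<n, states are 0..<d (so chi = {..<d}).
  A collection Gamma is a function  nat set => (nat => nat) => real :
  Gamma S x is the entry of Gamma_S at the local assignment x in chi^S
  (x an extensional function on S, i.e. x : PiE S (%_. {..<d})).
  Entries outside the index range are required to be 0 (canonical representation).\<close>

definition asg :: "nat \<Rightarrow> nat set \<Rightarrow> (nat \<Rightarrow> nat) set" where
  "asg d S = PiE S (\<lambda>_. {..<d})"

definition SA_index :: "nat \<Rightarrow> nat \<Rightarrow> nat set set" where
  "SA_index n m = {S. S \<subseteq> {..<n} \<and> 1 \<le> card S \<and> card S \<le> m}"

definition SA_polytope :: "nat \<Rightarrow> nat \<Rightarrow> nat \<Rightarrow> (nat set \<Rightarrow> (nat \<Rightarrow> nat) \<Rightarrow> real) set" where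
  "SA_polytope n d m = {\<Gamma>.
     (\<forall>S x. \<Gamma> S x \<noteq> 0 \<longrightarrow> S \<in> SA_index n m \<and> x \<in> asg d S) \<and>
     (\<forall>S\<in>SA_index n m. \<forall>x\<in>asg d S. 0 \<le> \<Gamma> S x) \<and>
     (\<forall>S\<in>SA_index n m. (\<Sum>x\<in>asg d S. \<Gamma> S x) = 1) \<and>
     (\<forall>S\<in>SA_index n m. \<forall>T\<in>SA_index n m. S \<subset> T \<longrightarrow>
        (\<forall>y\<in>asg d S. (\<Sum>x\<in>{x\<in>asg d T. restrict x S = y}. \<Gamma> T x) = \<Gamma> S y))}"

definition gam1 :: "(nat set \<Rightarrow> (nat \<Rightarrow> nat) \<Rightarrow> real) \<Rightarrow> nat \<Rightarrow> nat \<Rightarrow> real" where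
  "gam1 \<Gamma> i a = \<Gamma> {i} ((\<lambda>_. undefined)(i := a))"

definition gam2 :: "(nat set \<Rightarrow> (nat \<Rightarrow> nat) \<Rightarrow> real) \<Rightarrow> nat \<Rightarrow> nat \<Rightarrow> nat \<Rightarrow> nat \<Rightarrow> real" where
  "gam2 \<Gamma> i j a b = \<Gamma> {i, j} ((\<lambda>_. undefined)(i := a, j := b))"

text \<open>Edges are pairs (i,j) with i < j; theta2 i j a b = theta_ij(x_i = a, x_j = b).
  The cost is C = - theta, extended by 0; this is <C, Gamma>.\<close>
definition cost ::
  "nat \<Rightarrow> nat \<Rightarrow> (nat \<times> nat) set \<Rightarrow> (nat \<Rightarrow> nat \<Rightarrow> real) \<Rightarrow> (nat \<Rightarrow> nat \<Rightarrow> nat \<Rightarrow> nat \<Rightarrow> real)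
   \<Rightarrow> (nat set \<Rightarrow> (nat \<Rightarrow> nat) \<Rightarrow> real) \<Rightarrow> real" where
  "cost n d E \<theta>1 \<theta>2 \<Gamma> =
     (\<Sum>i<n. \<Sum>a<d. - \<theta>1 i a * gam1 \<Gamma> i a) +
     (\<Sum>(i,j)\<in>E. \<Sum>a<d. \<Sum>b<d. - \<theta>2 i j a b * gam2 \<Gamma> i j a b)"

definition norm1 :: "nat \<Rightarrow> nat \<Rightarrow> nat \<Rightarrow> (nat set \<Rightarrow> (nat \<Rightarrow> nat) \<Rightarrow> real) \<Rightarrow> real" where
  "norm1 n d m \<Gamma> = (\<Sum>S\<in>SA_index n m. \<Sum>x\<in>asg d S. \<bar>\<Gamma> S x\<bar>)"

text \<open>Entropy H(Gamma) = sum of Gamma (- log Gamma + 1) over all entries (0 log 0 = 0).\<close>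
definition entropy :: "nat \<Rightarrow> nat \<Rightarrow> nat \<Rightarrow> (nat set \<Rightarrow> (nat \<Rightarrow> nat) \<Rightarrow> real) \<Rightarrow> real" where
  "entropy n d m \<Gamma> = (\<Sum>S\<in>SA_index n m. \<Sum>x\<in>asg d S. \<Gamma> S x * (- ln (\<Gamma> S x) + 1))"

definition integral_coll :: "nat \<Rightarrow> nat \<Rightarrow> nat \<Rightarrow> (nat set \<Rightarrow> (nat \<Rightarrow> nat) \<Rightarrow> real) \<Rightarrow> bool" where
  "integral_coll n d m \<Gamma> \<longleftrightarrow> (\<forall>S\<in>SA_index n m. \<forall>x\<in>asg d S. \<Gamma> S x \<in> {0, 1})"

definition SA_tight where
  "SA_tight n d m E \<theta>1 \<theta>2 \<longleftrightarrow>
     (\<exists>\<Gamma>\<in>SA_polytope n d m. integral_coll n d m \<Gamma> \<and>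
        (\<forall>\<Gamma>'\<in>SA_polytope n d m. cost n d E \<theta>1 \<theta>2 \<Gamma> \<le> cost n d E \<theta>1 \<theta>2 \<Gamma>'))"

definition SA_vertices :: "nat \<Rightarrow> nat \<Rightarrow> nat \<Rightarrow> (nat set \<Rightarrow> (nat \<Rightarrow> nat) \<Rightarrow> real) set" where
  "SA_vertices n d m = {\<Gamma> \<in> SA_polytope n d m.
     \<forall>\<Gamma>1\<in>SA_polytope n d m. \<forall>\<Gamma>2\<in>SA_polytope n d m. \<forall>t::real. 0 < t \<and> t < 1 \<and>
       \<Gamma> = (\<lambda>S x. t * \<Gamma>1 S x + (1 - t) * \<Gamma>2 S x) \<longrightarrow> \<Gamma>1 = \<Gamma>2}"

definition SA_opt_vertices where
  "SA_opt_vertices n d m E \<theta>1 \<theta>2 = {V \<in> SA_vertices n d m.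
     \<forall>\<Gamma>\<in>SA_polytope n d m. cost n d E \<theta>1 \<theta>2 V \<le> cost n d E \<theta>1 \<theta>2 \<Gamma>}"

definition R1 where
  "R1 n d m = Sup (norm1 n d m ` SA_polytope n d m)"

definition RH where
  "RH n d m = Sup {entropy n d m \<Gamma> - entropy n d m \<Gamma>' | \<Gamma> \<Gamma>'.
                    \<Gamma> \<in> SA_polytope n d m \<and> \<Gamma>' \<in> SA_polytope n d m}"

definition gap where
  "gap n d m E \<theta>1 \<theta>2 = Inf {cost n d E \<theta>1 \<theta>2 V1 - cost n d E \<theta>1 \<theta>2 V2 | V1 V2.
      V1 \<in> SA_vertices n d m - SA_opt_vertices n d m E \<theta>1 \<theta>2 \<and>
      V2 \<in> SA_opt_vertices n d m E \<theta>1 \<theta>2}"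

definition energy where
  "energy n E \<theta>1 \<theta>2 (x :: nat \<Rightarrow> nat) =
     (\<Sum>i<n. \<theta>1 i (x i)) + (\<Sum>(i,j)\<in>E. \<theta>2 i j (x i) (x j))"

definition is_MAP where
  "is_MAP n d E \<theta>1 \<theta>2 x \<longleftrightarrow> (\<forall>i<n. x i < d) \<and>
     (\<forall>y. (\<forall>i<n. y i < d) \<longrightarrow> energy n E \<theta>1 \<theta>2 y \<le> energy n E \<theta>1 \<theta>2 x)"

end

theory Submission
  imports Defs
begin

definition Kset :: "nat \<Rightarrow> nat \<Rightarrow> nat \<Rightarrow> (nat set \<times> (nat \<Rightarrow> nat)) set" where
  "Kset n d m = Sigma (SA_index n m) (asg d)"

definition supp :: "nat \<Rightarrow> nat \<Rightarrow> nat \<Rightarrow> (nat set \<Rightarrow> (nat \<Rightarrow> nat) \<Rightarrow> real) \<Rightarrow> (nat set \<times> (nat \<Rightarrow> nat)) set" where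
  "supp n d m G = {k \<in> Kset n d m. G (fst k) (snd k) \<noteq> 0}"

definition cc :: "real \<Rightarrow> (nat set \<Rightarrow> (nat \<Rightarrow> nat) \<Rightarrow> real) \<Rightarrow> (nat set \<Rightarrow> (nat \<Rightarrow> nat) \<Rightarrow> real) \<Rightarrow> (nat set \<Rightarrow> (nat \<Rightarrow> nat) \<Rightarrow> real)" where
  "cc t A B = (\<lambda>S x. t * A S x + (1 - t) * B S x)"

lemma fin_index: "finite (SA_index n m)"
proof -
  have "SA_index n m \<subseteq> Pow {..<n}" unfolding SA_index_def by auto
  then show ?thesis using finite_subset[of "SA_index n m" "Pow {..<n}"] by simp
qed

lemma index_sub: "S \<in> SA_index n m \<Longrightarrow> S \<subseteq> {..<n}"
  unfolding SA_index_def by auto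

lemma index_fin: "S \<in> SA_index n m \<Longrightarrow> finite S"
  using finite_subset[OF index_sub] by blast

lemma fin_asg: "finite S \<Longrightarrow> finite (asg d S)"
  unfolding asg_def by (intro finite_PiE) auto

lemma fin_K: "finite (Kset n d m)"
  unfolding Kset_def by (intro finite_SigmaI fin_index fin_asg index_fin)

lemma fin_supp: "finite (supp n d m G)"
  unfolding supp_def using fin_K by auto

lemma supp_sub: "supp n d m G \<subseteq> Kset n d m"
  unfolding supp_def by auto

lemma P_facts:
  assumes "G \<in> SA_polytope n d m"
  shows "\<forall>S x. G S x \<noteq> 0 \<longrightarrow> S \<in> SA_index n m \<and> x \<in> asg d S"
    and "\<forall>S\<in>SA_index n m. \<forall>x\<in>asg d S. 0 \<le> G S x"
    and "\<forall>S\<in>SA_index n m. (\<Sum>x\<in>asg d S. G S x) = 1"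
    and "\<forall>S\<in>SA_index n m. \<forall>T\<in>SA_index n m. S \<subset> T \<longrightarrow>
        (\<forall>y\<in>asg d S. (\<Sum>x\<in>{x\<in>asg d T. restrict x S = y}. G T x) = G S y)"
  using assms unfolding SA_polytope_def mem_Collect_eq apply -
  apply (elim conjE, assumption)+
  done

lemma P_D1: "G \<in> SA_polytope n d m \<Longrightarrow> G S x \<noteq> 0 \<Longrightarrow> S \<in> SA_index n m \<and> x \<in> asg d S"
  using P_facts(1) by metis

lemma P_out: "G \<in> SA_polytope n d m \<Longrightarrow> (S, x) \<notin> Kset n d m \<Longrightarrow> G S x = 0"
  using P_D1[of G n d m S x] unfolding Kset_def by blast

lemma P_nonneg: "G \<in> SA_polytope n d m \<Longrightarrow> 0 \<le> G S x"
proof -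
  assume G: "G \<in> SA_polytope n d m"
  show ?thesis
  proof (cases "G S x = 0")
    case False
    then have "S \<in> SA_index n m \<and> x \<in> asg d S" using P_D1[OF G] by blast
    then show ?thesis using P_facts(2)[OF G] by blast
  qed simp
qed

lemma P_sum: "G \<in> SA_polytope n d m \<Longrightarrow> S \<in> SA_index n m \<Longrightarrow> (\<Sum>x\<in>asg d S. G S x) = 1"
  using P_facts(3) by blast

lemma P_le1:
  assumes G: "G \<in> SA_polytope n d m" shows "G S x \<le> 1"
proof (cases "(S, x) \<in> Kset n d m")
  case True
  then have S: "S \<in> SA_index n m" "x \<in> asg d S" unfolding Kset_def by auto
  have fin: "finite (asg d S)" using fin_asg index_fin S(1) by blast
  have "G S x \<le> (\<Sum>x\<in>asg d S. G S x)"
    by (rule member_le_sum[OF S(2) _ fin]) (rule P_nonneg[OF G])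
  then show ?thesis using P_sum[OF G S(1)] by simp
next
  case c: False
  have "G S x = 0" by (rule P_out[OF G c])
  then show ?thesis by simp
qed

lemma P_marg: "G \<in> SA_polytope n d m \<Longrightarrow> S \<in> SA_index n m \<Longrightarrow> T \<in> SA_index n m \<Longrightarrow> S \<subset> T
  \<Longrightarrow> y \<in> asg d S \<Longrightarrow> (\<Sum>x\<in>{x\<in>asg d T. restrict x S = y}. G T x) = G S y"
  using P_facts(4) by blast

lemma P_eqI:
  assumes "A \<in> SA_polytope n d m" "B \<in> SA_polytope n d m"
    and "\<And>S x. (S, x) \<in> Kset n d m \<Longrightarrow> A S x = B S x"
  shows "A = B"
proof (intro ext)
  fix S x
  show "A S x = B S x"
  proof (cases "(S, x) \<in> Kset n d m")
    case True then show ?thesis using assms(3) by blast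
  next
    case c: False
    show ?thesis using P_out[OF assms(1) c] P_out[OF assms(2) c] by simp
  qed
qed

lemma affine_P:
  assumes A: "A \<in> SA_polytope n d m" and B: "B \<in> SA_polytope n d m" and ab: "\<alpha> + \<beta> = 1"
    and nn: "\<And>S x. 0 \<le> \<alpha> * A S x + \<beta> * B S x"
  shows "(\<lambda>S x. \<alpha> * A S x + \<beta> * B S x) \<in> SA_polytope n d m"
proof -
  have s1: "(\<Sum>x\<in>X. \<alpha> * A S x + \<beta> * B S x) = \<alpha> * (\<Sum>x\<in>X. A S x) + \<beta> * (\<Sum>x\<in>X. B S x)" for X S
    by (simp add: sum.distrib sum_distrib_left)
  show ?thesis
    unfolding SA_polytope_def
  proof (intro CollectI conjI)
    show "\<forall>S x. \<alpha> * A S x + \<beta> * B S x \<noteq> 0 \<longrightarrow> S \<in> SA_index n m \<and> x \<in> asg d S"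
    proof (intro allI impI)
      fix S x assume "\<alpha> * A S x + \<beta> * B S x \<noteq> 0"
      then have "A S x \<noteq> 0 \<or> B S x \<noteq> 0" by auto
      then show "S \<in> SA_index n m \<and> x \<in> asg d S" using P_D1[OF A] P_D1[OF B] by blast
    qed
    show "\<forall>S\<in>SA_index n m. \<forall>x\<in>asg d S. 0 \<le> \<alpha> * A S x + \<beta> * B S x" using nn by blast
    show "\<forall>S\<in>SA_index n m. (\<Sum>x\<in>asg d S. \<alpha> * A S x + \<beta> * B S x) = 1"
      using s1 P_sum[OF A] P_sum[OF B] ab by simp
    show "\<forall>S\<in>SA_index n m. \<forall>T\<in>SA_index n m. S \<subset> T \<longrightarrow>
        (\<forall>y\<in>asg d S. (\<Sum>x\<in>{x\<in>asg d T. restrict x S = y}. \<alpha> * A T x + \<beta> * B T x) = \<alpha> * A S y + \<beta> * B S y)"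
      using s1 P_marg[OF A] P_marg[OF B] by simp
  qed
qed

lemma cc_P:
  assumes A: "A \<in> SA_polytope n d m" and B: "B \<in> SA_polytope n d m" and t: "0 \<le> t" "t \<le> 1"
  shows "cc t A B \<in> SA_polytope n d m"
  unfolding cc_def
proof (rule affine_P[OF A B])
  show "t + (1 - t) = 1" by simp
  fix S x show "0 \<le> t * A S x + (1 - t) * B S x"
    using t P_nonneg[OF A, of S x] P_nonneg[OF B, of S x] by simp
qed

lemma supp_iff: "k \<in> supp n d m G \<longleftrightarrow> k \<in> Kset n d m \<and> G (fst k) (snd k) \<noteq> 0"
  unfolding supp_def by simp

lemma supp_nonempty:
  assumes G: "G \<in> SA_polytope n d m" and ne: "SA_index n m \<noteq> {}"
  shows "supp n d m G \<noteq> {}"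
proof -
  obtain S where S: "S \<in> SA_index n m" using ne by blast
  have "(\<Sum>x\<in>asg d S. G S x) = 1" using P_sum[OF G S] .
  then obtain x where x: "x \<in> asg d S" "G S x \<noteq> 0"
    by (metis (mono_tags, lifting) sum.neutral zero_neq_one)
  then have "(S, x) \<in> supp n d m G" using S unfolding supp_def Kset_def by auto
  then show ?thesis by blast
qed

lemma push:
  assumes A: "A \<in> SA_polytope n d m" and B: "B \<in> SA_polytope n d m" and AB: "A \<noteq> B"
    and ne: "SA_index n m \<noteq> {}"
  shows "\<exists>\<mu> C. 0 \<le> \<mu> \<and> \<mu> < 1 \<and> C \<in> SA_polytope n d m \<and> B = cc \<mu> A C \<and>
     supp n d m C \<subseteq> supp n d m A \<union> supp n d m B \<and> (\<exists>k\<in>supp n d m A. k \<notin> supp n d m C)"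
proof -
  define f where "f = (\<lambda>k. B (fst k) (snd k) / A (fst k) (snd k))"
  define \<mu> where "\<mu> = Min (f ` supp n d m A)"
  have fin: "finite (f ` supp n d m A)" using fin_supp by blast
  have nemp: "f ` supp n d m A \<noteq> {}" using supp_nonempty[OF A ne] by blast
  have Apos: "A (fst k) (snd k) > 0" if "k \<in> supp n d m A" for k
    using that P_nonneg[OF A] unfolding supp_def by (simp add: order_less_le)
  have fnn: "f k \<ge> 0" if "k \<in> supp n d m A" for k
    unfolding f_def using Apos[OF that] P_nonneg[OF B] by simp
  have mule: "\<mu> \<le> f k" if "k \<in> supp n d m A" for k
    unfolding \<mu>_def using fin that by simp
  obtain k0 where k0: "k0 \<in> supp n d m A" "f k0 = \<mu>"
    using Min_in[OF fin nemp] unfolding \<mu>_def by (metis imageE)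
  have mu0: "0 \<le> \<mu>" using fnn[OF k0(1)] k0(2) by simp
  have BmuA: "\<mu> * A S x \<le> B S x" for S x
  proof (cases "(S, x) \<in> supp n d m A")
    case True
    have "\<mu> \<le> B S x / A S x" using mule[OF True] unfolding f_def by simp
    then show ?thesis using Apos[OF True] by (simp add: le_divide_eq)
  next
    case False
    then have "A S x = 0"
      by (metis P_out[OF A] fst_conv snd_conv supp_iff)
    then show ?thesis using P_nonneg[OF B] by simp
  qed
  have mu1: "\<mu> < 1"
  proof (rule ccontr)
    assume "\<not> \<mu> < 1"
    then have ge: "A S x \<le> B S x" for S x
    proof -
      assume "\<not> \<mu> < 1"
      then have "1 * A S x \<le> \<mu> * A S x"
        using P_nonneg[OF A, of S x] by (intro mult_right_mono) auto
      then show ?thesis using BmuA[of S x] by linarith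
    qed
    have "A S x = B S x" if "(S, x) \<in> Kset n d m" for S x
    proof -
      have S: "S \<in> SA_index n m" "x \<in> asg d S" using that unfolding Kset_def by auto
      have finS: "finite (asg d S)" using fin_asg index_fin S(1) by blast
      have "(\<Sum>y\<in>asg d S. B S y - A S y) = 0"
        using P_sum[OF A S(1)] P_sum[OF B S(1)] by (simp add: sum_subtractf)
      moreover have "\<And>y. y \<in> asg d S \<Longrightarrow> 0 \<le> B S y - A S y" using ge by simp
      ultimately have "\<forall>y\<in>asg d S. B S y - A S y = 0"
        using sum_nonneg_eq_0_iff[OF finS, of "\<lambda>y. B S y - A S y"] by blast
      then show ?thesis using S by simp
    qed
    then have "A = B" by (rule P_eqI[OF A B])
    then show False using AB by simp
  qed
  define C where "C = (\<lambda>S x. (1 / (1 - \<mu>)) * B S x + (- \<mu> / (1 - \<mu>)) * A S x)"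
  have Ceq: "C S x = (B S x - \<mu> * A S x) / (1 - \<mu>)" for S x
    unfolding C_def by (simp add: diff_divide_distrib)
  have CP: "C \<in> SA_polytope n d m"
    unfolding C_def
  proof (rule affine_P[OF B A])
    show "1 / (1 - \<mu>) + - \<mu> / (1 - \<mu>) = 1" using mu1 by (simp add: field_simps)
    fix S x
    show "0 \<le> 1 / (1 - \<mu>) * B S x + - \<mu> / (1 - \<mu>) * A S x"
      using Ceq[of S x] BmuA[of S x] mu1 unfolding C_def by simp
  qed
  have Bcc: "B = cc \<mu> A C"
    unfolding cc_def
  proof (intro ext)
    fix S x
    have "1 - \<mu> \<noteq> 0" using mu1 by simp
    then show "B S x = \<mu> * A S x + (1 - \<mu>) * C S x" unfolding Ceq by simp
  qed
  have suppC: "supp n d m C \<subseteq> supp n d m A \<union> supp n d m B"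
  proof
    fix k assume k: "k \<in> supp n d m C"
    then have "C (fst k) (snd k) \<noteq> 0" "k \<in> Kset n d m" by (simp_all add: supp_iff)
    then have "A (fst k) (snd k) \<noteq> 0 \<or> B (fst k) (snd k) \<noteq> 0" using Ceq by force
    then show "k \<in> supp n d m A \<union> supp n d m B" using \<open>k \<in> Kset n d m\<close> by (auto simp: supp_iff)
  qed
  have "k0 \<notin> supp n d m C"
  proof -
    have "A (fst k0) (snd k0) > 0" using Apos[OF k0(1)] .
    then have "B (fst k0) (snd k0) = \<mu> * A (fst k0) (snd k0)" using k0(2) unfolding f_def
      by (simp add: divide_eq_eq)
    then show ?thesis unfolding supp_def using Ceq by simp
  qed
  then show ?thesis using mu0 mu1 CP Bcc suppC k0(1) by blast
qed

lemma supp_cc_sub: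
  assumes A: "A \<in> SA_polytope n d m" and B: "B \<in> SA_polytope n d m" and t: "0 < t" "t < 1"
  shows "supp n d m A \<subseteq> supp n d m (cc t A B)"
proof
  fix k assume k: "k \<in> supp n d m A"
  then have "A (fst k) (snd k) > 0" using P_nonneg[OF A] by (simp add: supp_iff order_less_le)
  then have "t * A (fst k) (snd k) > 0" using t by simp
  moreover have "(1 - t) * B (fst k) (snd k) \<ge> 0" using t P_nonneg[OF B] by simp
  ultimately have "cc t A B (fst k) (snd k) \<noteq> 0" unfolding cc_def by linarith
  then show "k \<in> supp n d m (cc t A B)" using k by (simp add: supp_iff)
qed

lemma cc_sym: "cc t A B = cc (1 - t) B A"
  unfolding cc_def by (intro ext) simp

lemma cc_same: "cc t A A = A"
  unfolding cc_def by (intro ext) (simp add: algebra_simps)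

lemma vertex_P: "V \<in> SA_vertices n d m \<Longrightarrow> V \<in> SA_polytope n d m"
  unfolding SA_vertices_def by simp

lemma vertex_ext:
  assumes "V \<in> SA_vertices n d m" "A \<in> SA_polytope n d m" "B \<in> SA_polytope n d m" "0 < t" "t < 1"
    "V = cc t A B"
  shows "A = B"
proof -
  have H: "\<forall>\<Gamma>1\<in>SA_polytope n d m. \<forall>\<Gamma>2\<in>SA_polytope n d m. \<forall>t::real. 0 < t \<and> t < 1 \<and>
       V = (\<lambda>S x. t * \<Gamma>1 S x + (1 - t) * \<Gamma>2 S x) \<longrightarrow> \<Gamma>1 = \<Gamma>2"
    using assms(1) unfolding SA_vertices_def mem_Collect_eq by (rule conjunct2)
  have "V = (\<lambda>S x. t * A S x + (1 - t) * B S x)" using assms(6) unfolding cc_def .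
  then show ?thesis using H assms(2-5) by blast
qed

lemma vertex_supp:
  assumes V: "V \<in> SA_vertices n d m" and W: "W \<in> SA_polytope n d m"
    and sub: "supp n d m W \<subseteq> supp n d m V" and ne: "SA_index n m \<noteq> {}"
  shows "W = V"
proof (rule ccontr)
  assume WV: "W \<noteq> V"
  have VP: "V \<in> SA_polytope n d m" using vertex_P[OF V] .
  obtain \<nu> C where nu: "0 \<le> \<nu>" "\<nu> < 1" and C: "C \<in> SA_polytope n d m" and Vcc: "V = cc \<nu> W C"
    and k: "\<exists>k\<in>supp n d m W. k \<notin> supp n d m C"
    using push[OF W VP WV ne] by blast
  show False
  proof (cases "\<nu> = 0")
    case True
    then have "V = C" using Vcc unfolding cc_def by (intro ext) simp
    then show False using k sub by blast
  next
    case False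
    then have "W = C" using vertex_ext[OF V W C _ nu(2) Vcc] nu(1) by simp
    then have "V = W" using Vcc cc_same by simp
    then show False using WV by simp
  qed
qed

lemma finite_vertices:
  assumes ne: "SA_index n m \<noteq> {}"
  shows "finite (SA_vertices n d m)"
proof -
  have inj: "inj_on (supp n d m) (SA_vertices n d m)"
  proof (rule inj_onI)
    fix V W assume V: "V \<in> SA_vertices n d m" and W: "W \<in> SA_vertices n d m"
      and eq: "supp n d m V = supp n d m W"
    show "V = W" using vertex_supp[OF W vertex_P[OF V] _ ne] eq by simp
  qed
  have "supp n d m ` SA_vertices n d m \<subseteq> Pow (Kset n d m)" using supp_sub by blast
  moreover have "finite (Pow (Kset n d m))" using fin_K by simp
  ultimately have "finite (supp n d m ` SA_vertices n d m)" by (rule finite_subset)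
  then show ?thesis using finite_imageD[OF _ inj] by blast
qed

lemma phi_nonneg:
  assumes ne: "SA_index n m \<noteq> {}"
    and aff: "\<And>A B t. A \<in> SA_polytope n d m \<Longrightarrow> B \<in> SA_polytope n d m \<Longrightarrow> 0 \<le> t \<Longrightarrow> t \<le> 1
               \<Longrightarrow> \<Phi> (cc t A B) = t * \<Phi> A + (1 - t) * \<Phi> B"
    and vert: "\<And>V. V \<in> SA_vertices n d m \<Longrightarrow> 0 \<le> \<Phi> V"
    and G: "G \<in> SA_polytope n d m"
  shows "0 \<le> \<Phi> G"
  using G
proof (induction "card (supp n d m G)" arbitrary: G rule: less_induct)
  case less
  note GP = less.prems
  show ?case
  proof (cases "G \<in> SA_vertices n d m")
    case True then show ?thesis using vert by blast
  next
    case False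
    have "\<not> (\<forall>\<Gamma>1\<in>SA_polytope n d m. \<forall>\<Gamma>2\<in>SA_polytope n d m. \<forall>t::real. 0 < t \<and> t < 1 \<and>
       G = (\<lambda>S x. t * \<Gamma>1 S x + (1 - t) * \<Gamma>2 S x) \<longrightarrow> \<Gamma>1 = \<Gamma>2)"
      using False GP unfolding SA_vertices_def mem_Collect_eq by simp
    then obtain G1 G2 t where G1: "G1 \<in> SA_polytope n d m" and G2: "G2 \<in> SA_polytope n d m"
      and t: "0 < t" "t < 1" and Geq0: "G = (\<lambda>S x. t * G1 S x + (1 - t) * G2 S x)" and ne12: "G1 \<noteq> G2"
      by blast
    have Geq: "G = cc t G1 G2" using Geq0 unfolding cc_def .
    obtain W where W: "W \<in> SA_polytope n d m" "W \<noteq> G" "supp n d m W \<subseteq> supp n d m G"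
    proof (cases "G1 = G")
      case True
      have "G = cc (1 - t) G2 G1" using Geq cc_sym by metis
      then have "supp n d m G2 \<subseteq> supp n d m G" using supp_cc_sub[OF G2 G1, of "1 - t"] t by simp
      moreover have "G2 \<noteq> G" using True ne12 by simp
      ultimately show thesis using that G2 by blast
    next
      case False
      have "supp n d m G1 \<subseteq> supp n d m G" using supp_cc_sub[OF G1 G2 t] Geq by simp
      then show thesis using that G1 False by blast
    qed
    have finG: "finite (supp n d m G)" by (rule fin_supp)
    obtain \<mu> C1 where mu: "0 \<le> \<mu>" "\<mu> < 1" and C1: "C1 \<in> SA_polytope n d m" and Wcc: "W = cc \<mu> G C1"
      and sC1: "supp n d m C1 \<subseteq> supp n d m G \<union> supp n d m W"
      and k1: "\<exists>k\<in>supp n d m G. k \<notin> supp n d m C1"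
      using push[OF GP W(1) W(2)[symmetric] ne] by blast
    obtain \<nu> C2 where nu: "0 \<le> \<nu>" "\<nu> < 1" and C2: "C2 \<in> SA_polytope n d m" and Gcc: "G = cc \<nu> W C2"
      and sC2: "supp n d m C2 \<subseteq> supp n d m W \<union> supp n d m G"
      and k2: "\<exists>k\<in>supp n d m W. k \<notin> supp n d m C2"
      using push[OF W(1) GP W(2) ne] by blast
    have "supp n d m C1 \<subset> supp n d m G" using sC1 W(3) k1 by blast
    then have "card (supp n d m C1) < card (supp n d m G)" using psubset_card_mono[OF finG] by blast
    then have P1: "0 \<le> \<Phi> C1" using less.hyps C1 by blast
    have "supp n d m C2 \<subset> supp n d m G" using sC2 W(3) k2 by blast
    then have "card (supp n d m C2) < card (supp n d m G)" using psubset_card_mono[OF finG] by blast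
    then have P2: "0 \<le> \<Phi> C2" using less.hyps C2 by blast
    have e1: "\<Phi> W = \<mu> * \<Phi> G + (1 - \<mu>) * \<Phi> C1" using aff[OF GP C1 mu(1)] mu(2) Wcc by simp
    have e2: "\<Phi> G = \<nu> * \<Phi> W + (1 - \<nu>) * \<Phi> C2" using aff[OF W(1) C2 nu(1)] nu(2) Gcc by simp
    have e3: "(1 - \<nu> * \<mu>) * \<Phi> G = \<nu> * (1 - \<mu>) * \<Phi> C1 + (1 - \<nu>) * \<Phi> C2"
      using e2[unfolded e1] by (simp add: algebra_simps)
    have "0 \<le> \<nu> * (1 - \<mu>) * \<Phi> C1" using nu mu P1 by simp
    moreover have "0 \<le> (1 - \<nu>) * \<Phi> C2" using nu P2 by simp
    ultimately have "0 \<le> (1 - \<nu> * \<mu>) * \<Phi> G" using e3 by simp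
    moreover have "\<nu> * \<mu> < 1"
    proof -
      have "\<nu> * \<mu> \<le> \<nu> * 1" using nu(1) mu(2) by (intro mult_left_mono) auto
      then show ?thesis using nu(2) by simp
    qed
    ultimately show ?thesis by (simp add: zero_le_mult_iff)
  qed
qed

definition ind :: "nat \<Rightarrow> nat \<Rightarrow> (nat \<Rightarrow> nat) \<Rightarrow> (nat set \<Rightarrow> (nat \<Rightarrow> nat) \<Rightarrow> real)" where
  "ind n m y = (\<lambda>S z. if S \<in> SA_index n m \<and> z = restrict y S then 1 else 0)"

lemma single_index: "i < n \<Longrightarrow> 1 \<le> m \<Longrightarrow> {i} \<in> SA_index n m"
  unfolding SA_index_def by simp

lemma pair_index: "i < j \<Longrightarrow> j < n \<Longrightarrow> 2 \<le> m \<Longrightarrow> {i, j} \<in> SA_index n m"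
  unfolding SA_index_def by simp

lemma restrict_asg: "S \<subseteq> {..<n} \<Longrightarrow> \<forall>i<n. y i < d \<Longrightarrow> restrict y S \<in> asg d S"
  unfolding asg_def by auto

lemma upd1_eq: "((\<lambda>_. undefined)(i := a) = restrict y {i}) = (a = y i)"
proof
  assume "(\<lambda>_. undefined)(i := a) = restrict y {i}"
  then have "((\<lambda>_. undefined)(i := a)) i = restrict y {i} i" by simp
  then show "a = y i" by simp
qed (auto simp: fun_eq_iff)

lemma upd2_eq: "i \<noteq> j \<Longrightarrow> ((\<lambda>_. undefined)(i := a, j := b) = restrict y {i, j}) = (a = y i \<and> b = y j)"
proof
  assume ij: "i \<noteq> j" and h: "(\<lambda>_. undefined)(i := a, j := b) = restrict y {i, j}"
  have "((\<lambda>_. undefined)(i := a, j := b)) i = restrict y {i, j} i" using h by simp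
  moreover have "((\<lambda>_. undefined)(i := a, j := b)) j = restrict y {i, j} j" using h by simp
  ultimately show "a = y i \<and> b = y j" using ij by simp
qed (auto simp: fun_eq_iff)

lemma ind_gam1: "i < n \<Longrightarrow> 1 \<le> m \<Longrightarrow> gam1 (ind n m y) i a = (if a = y i then 1 else 0)"
  unfolding gam1_def ind_def using single_index[of i n m] upd1_eq[of i a y] by simp

lemma ind_gam2: "i < j \<Longrightarrow> j < n \<Longrightarrow> 2 \<le> m \<Longrightarrow>
   gam2 (ind n m y) i j a b = (if a = y i \<and> b = y j then 1 else 0)"
  unfolding gam2_def ind_def using pair_index upd2_eq[of i j a b y] by simp

lemma sum_ind: "(c::nat) < d \<Longrightarrow> (\<Sum>b<d. f b * (if b = c then 1 else 0)) = (f c::real)"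
proof -
  assume c: "c < d"
  have "(\<Sum>b<d. f b * (if b = c then 1 else 0)) = (\<Sum>b<d. if b = c then f b else 0)"
    by (intro sum.cong) auto
  also have "\<dots> = f c" using c by (simp add: sum.delta)
  finally show ?thesis .
qed

lemma ind_P:
  assumes y: "\<forall>i<n. y i < d"
  shows "ind n m y \<in> SA_polytope n d m"
  unfolding SA_polytope_def
proof (intro CollectI conjI)
  show "\<forall>S x. ind n m y S x \<noteq> 0 \<longrightarrow> S \<in> SA_index n m \<and> x \<in> asg d S"
    unfolding ind_def using restrict_asg[OF _ y] index_sub by auto
  show "\<forall>S\<in>SA_index n m. \<forall>x\<in>asg d S. 0 \<le> ind n m y S x" unfolding ind_def by simp
  show "\<forall>S\<in>SA_index n m. (\<Sum>x\<in>asg d S. ind n m y S x) = 1"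
  proof
    fix S assume S: "S \<in> SA_index n m"
    have fin: "finite (asg d S)" using fin_asg index_fin S by blast
    have r: "restrict y S \<in> asg d S" using restrict_asg[OF index_sub[OF S] y] .
    have "(\<Sum>x\<in>asg d S. ind n m y S x) = (\<Sum>x\<in>asg d S. if x = restrict y S then 1 else 0)"
      unfolding ind_def using S by simp
    also have "\<dots> = 1" using sum.delta[OF fin, of "restrict y S" "\<lambda>_. 1::real"] r by simp
    finally show "(\<Sum>x\<in>asg d S. ind n m y S x) = 1" .
  qed
  show "\<forall>S\<in>SA_index n m. \<forall>T\<in>SA_index n m. S \<subset> T \<longrightarrow>
        (\<forall>w\<in>asg d S. (\<Sum>x\<in>{x\<in>asg d T. restrict x S = w}. ind n m y T x) = ind n m y S w)"
  proof (intro ballI impI)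
    fix S T w assume S: "S \<in> SA_index n m" and T: "T \<in> SA_index n m" and ST: "S \<subset> T" and w: "w \<in> asg d S"
    have fin: "finite {x\<in>asg d T. restrict x S = w}" using fin_asg index_fin T by simp
    have r: "restrict y T \<in> asg d T" using restrict_asg[OF index_sub[OF T] y] .
    have rr: "restrict (restrict y T) S = restrict y S" using ST by (simp add: Int_absorb1 less_imp_le)
    have "(\<Sum>x\<in>{x\<in>asg d T. restrict x S = w}. ind n m y T x)
        = (\<Sum>x\<in>{x\<in>asg d T. restrict x S = w}. if x = restrict y T then 1 else 0)"
      unfolding ind_def using T by simp
    also have "\<dots> = (if restrict y T \<in> {x\<in>asg d T. restrict x S = w} then 1 else 0)"
      using sum.delta[OF fin, of "restrict y T" "\<lambda>_. 1::real"] by simp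
    also have "\<dots> = ind n m y S w" unfolding ind_def using r rr S by auto
    finally show "(\<Sum>x\<in>{x\<in>asg d T. restrict x S = w}. ind n m y T x) = ind n m y S w" .
  qed
qed

lemma cost_ind:
  assumes y: "\<forall>i<n. y i < d" and m: "2 \<le> m" and E: "E \<subseteq> {(i, j). i < j \<and> j < n}"
  shows "cost n d E \<theta>1 \<theta>2 (ind n m y) = - energy n E \<theta>1 \<theta>2 y"
proof -
  have s1: "(\<Sum>a<d. - \<theta>1 i a * gam1 (ind n m y) i a) = - \<theta>1 i (y i)" if i: "i < n" for i
  proof -
    have "(\<Sum>a<d. - \<theta>1 i a * gam1 (ind n m y) i a) = (\<Sum>a<d. if a = y i then - \<theta>1 i a else 0)"
      using ind_gam1[OF i, of m y] m by (intro sum.cong) auto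
    also have "\<dots> = - \<theta>1 i (y i)" using y i by (simp add: sum.delta')
    finally show ?thesis .
  qed
  have s2: "(\<Sum>a<d. \<Sum>b<d. - \<theta>2 i j a b * gam2 (ind n m y) i j a b) = - \<theta>2 i j (y i) (y j)"
    if ij: "(i, j) \<in> E" for i j
  proof -
    have ij': "i < j" "j < n" using ij E by auto
    have inner: "(\<Sum>b<d. - \<theta>2 i j a b * gam2 (ind n m y) i j a b)
       = (- \<theta>2 i j a (y j)) * (if a = y i then 1 else 0)" for a
    proof -
      have "(\<Sum>b<d. - \<theta>2 i j a b * gam2 (ind n m y) i j a b)
         = (\<Sum>b<d. (- \<theta>2 i j a b * (if a = y i then 1 else 0)) * (if b = y j then 1 else 0))"
        using ind_gam2[OF ij' m, of y a] by (intro sum.cong) auto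
      also have "\<dots> = - \<theta>2 i j a (y j) * (if a = y i then 1 else 0)"
        by (rule sum_ind) (use y ij' in auto)
      finally show ?thesis .
    qed
    have "(\<Sum>a<d. \<Sum>b<d. - \<theta>2 i j a b * gam2 (ind n m y) i j a b)
        = (\<Sum>a<d. (- \<theta>2 i j a (y j)) * (if a = y i then 1 else 0))"
      using inner by simp
    also have "\<dots> = - \<theta>2 i j (y i) (y j)" by (rule sum_ind) (use y ij' in auto)
    finally show ?thesis .
  qed
  have "cost n d E \<theta>1 \<theta>2 (ind n m y) = (\<Sum>i<n. - \<theta>1 i (y i)) + (\<Sum>(i, j)\<in>E. - \<theta>2 i j (y i) (y j))"
    unfolding cost_def using s1 s2 by (intro arg_cong2[where f = "(+)"] sum.cong) auto
  also have "\<dots> = - energy n E \<theta>1 \<theta>2 y"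
    unfolding energy_def by (simp add: sum_negf case_prod_unfold)
  finally show ?thesis .
qed

lemma gam1_cc: "gam1 (cc t A B) i a = t * gam1 A i a + (1 - t) * gam1 B i a"
  unfolding gam1_def cc_def by simp

lemma gam2_cc: "gam2 (cc t A B) i j a b = t * gam2 A i j a b + (1 - t) * gam2 B i j a b"
  unfolding gam2_def cc_def by simp

lemma lin_sum: "(\<Sum>x\<in>X. t * f x + (1 - t) * g x) = t * sum f X + (1 - t) * (sum g X :: real)"
  by (simp add: sum.distrib sum_distrib_left)

lemma cost_cc: "cost n d E \<theta>1 \<theta>2 (cc t A B) = t * cost n d E \<theta>1 \<theta>2 A + (1 - t) * cost n d E \<theta>1 \<theta>2 B"
proof -
  have in1: "(\<Sum>a<d. - \<theta>1 i a * gam1 (cc t A B) i a)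
     = t * (\<Sum>a<d. - \<theta>1 i a * gam1 A i a) + (1 - t) * (\<Sum>a<d. - \<theta>1 i a * gam1 B i a)" for i
    unfolding lin_sum[symmetric] gam1_cc by (intro sum.cong) (auto simp: algebra_simps)
  have in2: "(\<Sum>b<d. - \<theta>2 i j a b * gam2 (cc t A B) i j a b)
     = t * (\<Sum>b<d. - \<theta>2 i j a b * gam2 A i j a b) + (1 - t) * (\<Sum>b<d. - \<theta>2 i j a b * gam2 B i j a b)" for i j a
    unfolding lin_sum[symmetric] gam2_cc by (intro sum.cong) (auto simp: algebra_simps)
  have in3: "(\<Sum>a<d. \<Sum>b<d. - \<theta>2 i j a b * gam2 (cc t A B) i j a b)
     = t * (\<Sum>a<d. \<Sum>b<d. - \<theta>2 i j a b * gam2 A i j a b) + (1 - t) * (\<Sum>a<d. \<Sum>b<d. - \<theta>2 i j a b * gam2 B i j a b)" for i j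
    unfolding lin_sum[symmetric] in2 by (rule refl)
  have o1: "(\<Sum>i<n. \<Sum>a<d. - \<theta>1 i a * gam1 (cc t A B) i a)
     = t * (\<Sum>i<n. \<Sum>a<d. - \<theta>1 i a * gam1 A i a) + (1 - t) * (\<Sum>i<n. \<Sum>a<d. - \<theta>1 i a * gam1 B i a)"
    unfolding lin_sum[symmetric] in1 by (rule refl)
  have o2: "(\<Sum>(i, j)\<in>E. \<Sum>a<d. \<Sum>b<d. - \<theta>2 i j a b * gam2 (cc t A B) i j a b)
     = t * (\<Sum>(i, j)\<in>E. \<Sum>a<d. \<Sum>b<d. - \<theta>2 i j a b * gam2 A i j a b)
       + (1 - t) * (\<Sum>(i, j)\<in>E. \<Sum>a<d. \<Sum>b<d. - \<theta>2 i j a b * gam2 B i j a b)"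
    unfolding lin_sum[symmetric]
  proof (intro sum.cong refl)
    fix k assume "k \<in> E"
    obtain i j where k: "k = (i, j)" by fastforce
    show "(case k of (i, j) \<Rightarrow> \<Sum>a<d. \<Sum>b<d. - \<theta>2 i j a b * gam2 (cc t A B) i j a b) =
         t * (case k of (i, j) \<Rightarrow> \<Sum>a<d. \<Sum>b<d. - \<theta>2 i j a b * gam2 A i j a b) +
         (1 - t) * (case k of (i, j) \<Rightarrow> \<Sum>a<d. \<Sum>b<d. - \<theta>2 i j a b * gam2 B i j a b)"
      unfolding k prod.case by (rule in3)
  qed
  show ?thesis unfolding cost_def o1 o2 by (simp add: algebra_simps)
qed

lemma asg1: "asg d {i} = (\<lambda>a. (\<lambda>_. undefined)(i := a)) ` {..<d}"
proof
  show "asg d {i} \<subseteq> (\<lambda>a. (\<lambda>_. undefined)(i := a)) ` {..<d}"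
  proof
    fix z assume z: "z \<in> asg d {i}"
    then have "z = (\<lambda>_. undefined)(i := z i)" unfolding asg_def
      by (intro ext) (auto simp: PiE_def extensional_def)
    moreover have "z i < d" using z unfolding asg_def by auto
    ultimately show "z \<in> (\<lambda>a. (\<lambda>_. undefined)(i := a)) ` {..<d}" by blast
  qed
  show "(\<lambda>a. (\<lambda>_. undefined)(i := a)) ` {..<d} \<subseteq> asg d {i}"
    unfolding asg_def by (auto split: if_splits)
qed

lemma inj_upd1: "inj_on (\<lambda>a. (\<lambda>_. undefined)(i := a)) A"
  by (rule inj_onI) (metis fun_upd_same)

lemma sum_gam1:
  assumes G: "G \<in> SA_polytope n d m" and i: "i < n" and m: "1 \<le> m"
  shows "(\<Sum>a<d. gam1 G i a) = 1"
proof -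
  have "(\<Sum>a<d. gam1 G i a) = (\<Sum>z\<in>asg d {i}. G {i} z)"
    unfolding asg1 gam1_def sum.reindex[OF inj_upd1] by (simp add: comp_def)
  also have "\<dots> = 1" using P_sum[OF G single_index[OF i m]] .
  finally show ?thesis .
qed

lemma gam1_nonneg: assumes G: "G \<in> SA_polytope n d m" shows "0 \<le> gam1 G i a"
  unfolding gam1_def by (rule P_nonneg[OF G])

lemma gam1_int:
  assumes G: "G \<in> SA_polytope n d m" and I: "integral_coll n d m G" and i: "i < n" and m: "1 \<le> m" and a: "a < d"
  shows "gam1 G i a \<in> {0, 1}"
proof -
  have "(\<lambda>_. undefined)(i := a) \<in> asg d {i}" unfolding asg1 using a by blast
  then show ?thesis using I single_index[OF i m] unfolding integral_coll_def gam1_def by blast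
qed

lemma marg_ge:
  assumes G: "G \<in> SA_polytope n d m" and S: "S \<in> SA_index n m" and z: "z \<in> asg d S" and iS: "i \<in> S"
    and m: "1 \<le> m"
  shows "G S z \<le> gam1 G i (z i)"
proof -
  have rz: "restrict z {i} = (\<lambda>_. undefined)(i := z i)" by (intro ext) auto
  have i: "i < n" using index_sub[OF S] iS by auto
  show ?thesis
  proof (cases "S = {i}")
    case True
    have "z = (\<lambda>_. undefined)(i := z i)" using z True unfolding asg_def
      by (intro ext) (auto simp: PiE_def extensional_def)
    then show ?thesis unfolding gam1_def using True by simp
  next
    case False
    then have sub: "{i} \<subset> S" using iS by auto
    have w: "(\<lambda>_. undefined)(i := z i) \<in> asg d {i}" using z iS unfolding asg_def by (auto split: if_splits)
    have fin: "finite {x \<in> asg d S. restrict x {i} = (\<lambda>_. undefined)(i := z i)}"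
      using fin_asg index_fin S by simp
    have "G S z \<le> (\<Sum>x\<in>{x \<in> asg d S. restrict x {i} = (\<lambda>_. undefined)(i := z i)}. G S x)"
      by (rule member_le_sum) (use z rz P_nonneg[OF G] fin in auto)
    also have "\<dots> = gam1 G i (z i)" unfolding gam1_def
      by (rule P_marg[OF G single_index[OF i m] S sub w])
    finally show ?thesis .
  qed
qed

lemma integral_ind:
  assumes G: "G \<in> SA_polytope n d m" and I: "integral_coll n d m G" and m: "1 \<le> m"
  shows "\<exists>y. (\<forall>i<n. y i < d) \<and> G = ind n m y"
proof -
  have ex: "\<exists>a<d. gam1 G i a = 1" if i: "i < n" for i
  proof (rule ccontr)
    assume "\<not> (\<exists>a<d. gam1 G i a = 1)"
    then have "\<forall>a<d. gam1 G i a = 0" using gam1_int[OF G I i m] by blast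
    then have "(\<Sum>a<d. gam1 G i a) = 0" by simp
    then show False using sum_gam1[OF G i m] by simp
  qed
  have uniq: "a = b" if i: "i < n" and a: "a < d" "gam1 G i a = 1" and b: "b < d" "gam1 G i b = 1" for i a b
  proof (rule ccontr)
    assume ab: "a \<noteq> b"
    have "(\<Sum>c\<in>{a, b}. gam1 G i c) \<le> (\<Sum>c<d. gam1 G i c)"
      by (rule sum_mono2) (use a b gam1_nonneg[OF G] in auto)
    then show False using ab a b sum_gam1[OF G i m] by simp
  qed
  define y where "y = (\<lambda>i. if i < n then (SOME a. a < d \<and> gam1 G i a = 1) else 0)"
  have y: "y i < d \<and> gam1 G i (y i) = 1" if "i < n" for i
    using someI_ex[OF ex[OF that]] that unfolding y_def by simp
  have yd: "\<forall>i<n. y i < d" using y by blast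
  have key: "z = restrict y S" if S: "S \<in> SA_index n m" and z: "z \<in> asg d S" and nz: "G S z \<noteq> 0" for S z
  proof (intro ext)
    fix j
    show "z j = restrict y S j"
    proof (cases "j \<in> S")
      case True
      have j: "j < n" using index_sub[OF S] True by auto
      have zj: "z j < d" using z True unfolding asg_def by auto
      have "0 < G S z" using nz P_nonneg[OF G, of S z] by simp
      also have "\<dots> \<le> gam1 G j (z j)" by (rule marg_ge[OF G S z True m])
      finally have "gam1 G j (z j) = 1" using gam1_int[OF G I j m zj] by auto
      then have "z j = y j" using uniq[OF j zj] y[OF j] by blast
      then show ?thesis using True by simp
    next
      case False
      then show ?thesis using z unfolding asg_def by (auto simp: PiE_def extensional_def)
    qed
  qed
  have one: "G S (restrict y S) = 1" if S: "S \<in> SA_index n m" for S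
  proof -
    have fin: "finite (asg d S)" using fin_asg index_fin S by blast
    have r: "restrict y S \<in> asg d S" using restrict_asg[OF index_sub[OF S] yd] .
    have "(\<Sum>z\<in>asg d S. G S z) = (\<Sum>z\<in>asg d S. if z = restrict y S then G S z else 0)"
      using key[OF S] by (intro sum.cong) auto
    also have "\<dots> = G S (restrict y S)" using r fin by (simp add: sum.delta)
    finally show ?thesis using P_sum[OF G S] by simp
  qed
  have "G = ind n m y"
  proof (intro ext)
    fix S z
    show "G S z = ind n m y S z"
    proof (cases "S \<in> SA_index n m")
      case False
      then have "G S z = 0" using P_D1[OF G, of S z] by blast
      then show ?thesis unfolding ind_def using False by simp
    next
      case S: True
      show ?thesis
      proof (cases "z = restrict y S")
        case True then show ?thesis using one[OF S] S unfolding ind_def by simp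
      next
        case False
        have "G S z = 0"
        proof (rule ccontr)
          assume nz: "G S z \<noteq> 0"
          then have "z \<in> asg d S" using P_D1[OF G] by blast
          then show False using key[OF S _ nz] False by blast
        qed
        then show ?thesis unfolding ind_def using False by simp
      qed
    qed
  qed
  then show ?thesis using yd by blast
qed

lemma ind_vertex:
  assumes yd: "\<forall>i<n. y i < d"
  shows "ind n m y \<in> SA_vertices n d m"
  unfolding SA_vertices_def
proof (intro CollectI conjI ballI allI impI)
  show "ind n m y \<in> SA_polytope n d m" by (rule ind_P[OF yd])
  fix A B t
  assume A: "A \<in> SA_polytope n d m" and B: "B \<in> SA_polytope n d m"
    and h: "0 < t \<and> t < 1 \<and> ind n m y = (\<lambda>S x. t * A S x + (1 - t) * B S x)"
  show "A = B"
  proof (rule P_eqI[OF A B])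
    fix S x
    have eq: "ind n m y S x = t * A S x + (1 - t) * B S x" using h by simp
    have a: "0 \<le> A S x" "A S x \<le> 1" using P_nonneg[OF A] P_le1[OF A] by auto
    have b: "0 \<le> B S x" "B S x \<le> 1" using P_nonneg[OF B] P_le1[OF B] by auto
    have t: "0 < t" "t < 1" using h by auto
    have ta: "0 \<le> t * A S x" "t * A S x \<le> t" using a t by (simp_all add: mult_left_le)
    have tb: "0 \<le> (1 - t) * B S x" "(1 - t) * B S x \<le> 1 - t" using b t by (simp_all add: mult_left_le)
    show "A S x = B S x"
    proof (cases "ind n m y S x = 0")
      case True
      then have "t * A S x = 0" "(1 - t) * B S x = 0" using eq ta tb by linarith+
      then show ?thesis using t by simp
    next
      case False
      then have "ind n m y S x = 1" unfolding ind_def by (simp split: if_splits)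
      then have e1: "t * A S x + (1 - t) * B S x = 1" using eq by simp
      define u where "u = t * A S x"
      define v where "v = (1 - t) * B S x"
      have uv: "u + v = 1" "u \<le> t" "v \<le> 1 - t" using e1 ta tb unfolding u_def v_def by auto
      have "u = t" "v = 1 - t" using uv by linarith+
      then have "t * A S x = t * 1" "(1 - t) * B S x = (1 - t) * 1" unfolding u_def v_def by simp_all
      then show ?thesis using t by simp
    qed
  qed
qed

lemma ent_term: "0 \<le> (t::real) \<Longrightarrow> t \<le> 1 \<Longrightarrow> 0 \<le> t * (- ln t + 1) \<and> t * (- ln t + 1) \<le> 1"
proof -
  assume t0: "0 \<le> t" and t1: "t \<le> 1"
  show ?thesis
  proof (cases "t = 0")
    case True then show ?thesis by simp
  next
    case False
    then have tp: "0 < t" using t0 by simp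
    have "ln t \<le> 0" using t1 tp by simp
    then have "0 \<le> - ln t + 1" by linarith
    then have lo: "0 \<le> t * (- ln t + 1)" using tp by simp
    have "ln (1 / t) \<le> 1 / t - 1" using tp by (intro ln_le_minus_one) simp
    then have "- ln t \<le> 1 / t - 1" using tp by (simp add: ln_div)
    then have "t * (- ln t) \<le> t * (1 / t - 1)" using tp by (intro mult_left_mono) auto
    then have "t * (- ln t) \<le> 1 - t" using tp by (simp add: algebra_simps)
    then show ?thesis using lo by (simp add: algebra_simps)
  qed
qed

lemma entropy_bounds:
  assumes G: "G \<in> SA_polytope n d m"
  shows "0 \<le> entropy n d m G" "entropy n d m G \<le> (\<Sum>S\<in>SA_index n m. \<Sum>x\<in>asg d S. 1)"
proof -
  have b: "0 \<le> G S x * (- ln (G S x) + 1) \<and> G S x * (- ln (G S x) + 1) \<le> 1" for S x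
    using ent_term P_nonneg[OF G] P_le1[OF G] by blast
  show "0 \<le> entropy n d m G" unfolding entropy_def using b by (intro sum_nonneg) auto
  show "entropy n d m G \<le> (\<Sum>S\<in>SA_index n m. \<Sum>x\<in>asg d S. 1)" unfolding entropy_def
    using b by (intro sum_mono) auto
qed

lemma norm1_const:
  assumes G: "G \<in> SA_polytope n d m"
  shows "norm1 n d m G = real (card (SA_index n m))"
proof -
  have "norm1 n d m G = (\<Sum>S\<in>SA_index n m. \<Sum>x\<in>asg d S. G S x)"
    unfolding norm1_def using P_nonneg[OF G] by simp
  also have "\<dots> = (\<Sum>S\<in>SA_index n m. 1)" using P_sum[OF G] by simp
  finally show ?thesis by simp
qed

theorem theorem1:
  fixes n d m :: nat and E :: "(nat \<times> nat) set"
    and \<theta>1 :: "nat \<Rightarrow> nat \<Rightarrow> real" and \<theta>2 :: "nat \<Rightarrow> nat \<Rightarrow> nat \<Rightarrow> nat \<Rightarrow> real"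
    and \<eta> :: real and \<Gamma>s :: "nat set \<Rightarrow> (nat \<Rightarrow> nat) \<Rightarrow> real" and x :: "nat \<Rightarrow> nat"
  assumes "d \<ge> 1" and "2 \<le> m" and "m \<le> n"
    and "E \<subseteq> {(i, j). i < j \<and> j < n}"
    and "\<forall>i<n. \<exists>(a, b)\<in>E. i = a \<or> i = b"
    and "SA_tight n d m E \<theta>1 \<theta>2"
    and "card (SA_opt_vertices n d m E \<theta>1 \<theta>2) = 1"
    and "\<eta> > 0"
    and "\<eta> \<ge> (2 * R1 n d m * ln (64 * R1 n d m) + 2 * R1 n d m + 2 * RH n d m)
                / gap n d m E \<theta>1 \<theta>2"
    and "\<Gamma>s \<in> SA_polytope n d m"
    and "\<forall>\<Gamma>\<in>SA_polytope n d m.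
           cost n d E \<theta>1 \<theta>2 \<Gamma>s - entropy n d m \<Gamma>s / \<eta>
             \<le> cost n d E \<theta>1 \<theta>2 \<Gamma> - entropy n d m \<Gamma> / \<eta>"
    and "\<forall>i<n. x i < d \<and> (\<forall>a<d. gam1 \<Gamma>s i a \<le> gam1 \<Gamma>s i (x i))"
  shows "is_MAP n d E \<theta>1 \<theta>2 x"
proof -
  note m2 = assms(2) and Esub = assms(4) and eta = assms(8) and etab = assms(9)
    and Gs = assms(10) and optGs = assms(11) and xa = assms(12)
  let ?P = "SA_polytope n d m"
  let ?c = "cost n d E \<theta>1 \<theta>2"
  let ?H = "entropy n d m"
  have m1: "1 \<le> m" using m2 by simp
  have ne: "SA_index n m \<noteq> {}" using single_index[of 0 n m] m1 assms(2,3) by auto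
  obtain G0 where G0: "G0 \<in> ?P" "integral_coll n d m G0" and opt0: "\<forall>G\<in>?P. ?c G0 \<le> ?c G"
    using assms(6) unfolding SA_tight_def by blast
  obtain y0 where y0: "\<forall>i<n. y0 i < d" and G0eq: "G0 = ind n m y0"
    using integral_ind[OF G0 m1] by blast
  have G0v: "G0 \<in> SA_vertices n d m" using ind_vertex[OF y0] G0eq by simp
  have G0o: "G0 \<in> SA_opt_vertices n d m E \<theta>1 \<theta>2"
    unfolding SA_opt_vertices_def using G0v opt0 by blast
  have Opt: "SA_opt_vertices n d m E \<theta>1 \<theta>2 = {G0}"
  proof -
    obtain V where "SA_opt_vertices n d m E \<theta>1 \<theta>2 = {V}" using card_1_singletonE[OF assms(7)] by blast
    then show ?thesis using G0o by simp
  qed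
  have g0y: "gam1 G0 i a = (if a = y0 i then 1 else 0)" if "i < n" for i a
    using ind_gam1[OF that m1] G0eq by simp
  have aff_gam: "gam1 (cc t A B) i a = t * gam1 A i a + (1 - t) * gam1 B i a" for t A B i a
    by (rule gam1_cc)
  have big: "gam1 \<Gamma>s i (y0 i) > 1 / 2" if i: "i < n" for i
  proof (cases "SA_vertices n d m - SA_opt_vertices n d m E \<theta>1 \<theta>2 = {}")
    case True
    define \<Phi> where "\<Phi> = (\<lambda>G. gam1 G i (y0 i) - 1)"
    have "0 \<le> \<Phi> \<Gamma>s"
    proof (rule phi_nonneg[OF ne _ _ Gs])
      fix A B and t :: real
      show "\<Phi> (cc t A B) = t * \<Phi> A + (1 - t) * \<Phi> B" unfolding \<Phi>_def gam1_cc by (simp add: algebra_simps)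
    next
      fix V assume "V \<in> SA_vertices n d m"
      then have "V = G0" using True Opt by blast
      then show "0 \<le> \<Phi> V" unfolding \<Phi>_def using g0y[OF i] by simp
    qed
    then show ?thesis unfolding \<Phi>_def by simp
  next
    case False
    define Vn where "Vn = SA_vertices n d m - SA_opt_vertices n d m E \<theta>1 \<theta>2"
    define Gp where "Gp = {?c V1 - ?c V2 | V1 V2. V1 \<in> Vn \<and> V2 \<in> SA_opt_vertices n d m E \<theta>1 \<theta>2}"
    have Gp_eq: "Gp = (\<lambda>V. ?c V - ?c G0) ` Vn" unfolding Gp_def Opt by blast
    have finVn: "finite Vn" unfolding Vn_def using finite_vertices[OF ne] by blast
    have finGp: "finite Gp" unfolding Gp_eq using finVn by blast
    have neGp: "Gp \<noteq> {}" unfolding Gp_eq Vn_def using False by blast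
    have gapeq: "gap n d m E \<theta>1 \<theta>2 = Min Gp"
      unfolding gap_def Gp_def[symmetric] Vn_def[symmetric] using cInf_eq_Min[OF finGp neGp] .
    have posV: "?c V - ?c G0 > 0" if V: "V \<in> Vn" for V
    proof -
      have "V \<notin> SA_opt_vertices n d m E \<theta>1 \<theta>2" "V \<in> SA_vertices n d m" using V unfolding Vn_def by auto
      then obtain G where G: "G \<in> ?P" "\<not> ?c V \<le> ?c G" unfolding SA_opt_vertices_def by blast
      then show ?thesis using opt0 by force
    qed
    have gappos: "gap n d m E \<theta>1 \<theta>2 > 0"
      unfolding gapeq using Min_gr_iff[OF finGp neGp] posV unfolding Gp_eq by blast
    have gaple: "gap n d m E \<theta>1 \<theta>2 \<le> ?c V - ?c G0" if "V \<in> Vn" for V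
      unfolding gapeq using Min_le[OF finGp] that unfolding Gp_eq by blast
    define g where "g = gap n d m E \<theta>1 \<theta>2"
    define \<Phi> where "\<Phi> = (\<lambda>G. (?c G - ?c G0) - g * (1 - gam1 G i (y0 i)))"
    have "0 \<le> \<Phi> \<Gamma>s"
    proof (rule phi_nonneg[OF ne _ _ Gs])
      fix A B and t :: real
      show "\<Phi> (cc t A B) = t * \<Phi> A + (1 - t) * \<Phi> B"
        unfolding \<Phi>_def gam1_cc cost_cc by (simp add: algebra_simps)
    next
      fix V assume V: "V \<in> SA_vertices n d m"
      show "0 \<le> \<Phi> V"
      proof (cases "V = G0")
        case True then show ?thesis unfolding \<Phi>_def using g0y[OF i] by simp
      next
        case False
        then have "V \<in> Vn" unfolding Vn_def Opt using V by blast
        then have "g \<le> ?c V - ?c G0" using gaple unfolding g_def by blast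
        moreover have "0 \<le> g * gam1 V i (y0 i)"
          using gappos gam1_nonneg[OF vertex_P[OF V]] unfolding g_def by simp
        ultimately show ?thesis unfolding \<Phi>_def by (simp add: algebra_simps)
      qed
    qed
    then have low: "g * (1 - gam1 \<Gamma>s i (y0 i)) \<le> ?c \<Gamma>s - ?c G0" unfolding \<Phi>_def by simp
    have "?c \<Gamma>s - ?H \<Gamma>s / \<eta> \<le> ?c G0 - ?H G0 / \<eta>" using optGs G0(1) by blast
    then have up1: "?c \<Gamma>s - ?c G0 \<le> (?H \<Gamma>s - ?H G0) / \<eta>" by (simp add: diff_divide_distrib)
    define D where "D = {?H G - ?H G' | G G'. G \<in> ?P \<and> G' \<in> ?P}"
    define U where "U = (\<Sum>S\<in>SA_index n m. \<Sum>x\<in>asg d S. 1::real)"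
    have bddD: "bdd_above D"
    proof (rule bdd_aboveI)
      fix z assume "z \<in> D"
      then obtain G G' where z: "z = ?H G - ?H G'" "G \<in> ?P" "G' \<in> ?P" unfolding D_def by blast
      show "z \<le> U" using entropy_bounds[OF z(2)] entropy_bounds[OF z(3)] z(1) unfolding U_def by linarith
    qed
    have "?H \<Gamma>s - ?H G0 \<in> D" unfolding D_def using Gs G0(1) by blast
    then have "?H \<Gamma>s - ?H G0 \<le> RH n d m" unfolding RH_def D_def[symmetric] using cSup_upper bddD by blast
    then have up: "?c \<Gamma>s - ?c G0 \<le> RH n d m / \<eta>" using up1 eta by (smt (verit) divide_right_mono)
    have "norm1 n d m ` ?P = {real (card (SA_index n m))}"
    proof
      show "norm1 n d m ` ?P \<subseteq> {real (card (SA_index n m))}" using norm1_const by blast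
      have "norm1 n d m \<Gamma>s \<in> norm1 n d m ` ?P" using Gs by blast
      then show "{real (card (SA_index n m))} \<subseteq> norm1 n d m ` ?P" using norm1_const[OF Gs] by simp
    qed
    then have R1eq: "R1 n d m = real (card (SA_index n m))" unfolding R1_def by simp
    have "card (SA_index n m) \<ge> 1" using ne fin_index by (simp add: Suc_le_eq card_gt_0_iff)
    then have R1ge: "R1 n d m \<ge> 1" unfolding R1eq by simp
    then have "ln (64 * R1 n d m) \<ge> 0" by simp
    then have "2 * R1 n d m * ln (64 * R1 n d m) \<ge> 0" using R1ge by simp
    then have Nbig: "2 * R1 n d m * ln (64 * R1 n d m) + 2 * R1 n d m + 2 * RH n d m > 2 * RH n d m"
      using R1ge by linarith
    have "2 * R1 n d m * ln (64 * R1 n d m) + 2 * R1 n d m + 2 * RH n d m \<le> \<eta> * g"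
      using etab gappos unfolding g_def by (simp add: pos_divide_le_eq)
    then have etag: "2 * RH n d m < \<eta> * g" using Nbig by linarith
    have gq: "g * (1 - gam1 \<Gamma>s i (y0 i)) \<le> RH n d m / \<eta>" using low up by linarith
    then have "\<eta> * (g * (1 - gam1 \<Gamma>s i (y0 i))) \<le> RH n d m" using eta by (simp add: le_divide_eq mult.commute)
    show ?thesis
    proof (rule ccontr)
      assume "\<not> gam1 \<Gamma>s i (y0 i) > 1 / 2"
      then have q: "1 - gam1 \<Gamma>s i (y0 i) \<ge> 1 / 2" by simp
      have "\<eta> * g * (1 / 2) \<le> \<eta> * g * (1 - gam1 \<Gamma>s i (y0 i))"
        using q eta gappos unfolding g_def by (intro mult_left_mono) auto
      then show False using \<open>\<eta> * (g * (1 - gam1 \<Gamma>s i (y0 i))) \<le> RH n d m\<close> etag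
        by (simp add: algebra_simps)
    qed
  qed
  have xy: "x i = y0 i" if i: "i < n" for i
  proof (rule ccontr)
    assume ne': "x i \<noteq> y0 i"
    have "gam1 \<Gamma>s i (y0 i) \<le> gam1 \<Gamma>s i (x i)" using xa i y0 by blast
    then have "1 / 2 < gam1 \<Gamma>s i (x i)" using big[OF i] by simp
    have "(\<Sum>c\<in>{x i, y0 i}. gam1 \<Gamma>s i c) \<le> (\<Sum>c<d. gam1 \<Gamma>s i c)"
      by (rule sum_mono2) (use xa i y0 gam1_nonneg[OF Gs] in auto)
    then show False using ne' big[OF i] \<open>1 / 2 < gam1 \<Gamma>s i (x i)\<close> sum_gam1[OF Gs i m1] by simp
  qed
  have energy_eq: "energy n E \<theta>1 \<theta>2 x = energy n E \<theta>1 \<theta>2 y0"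
  proof -
    have "(\<Sum>i<n. \<theta>1 i (x i)) = (\<Sum>i<n. \<theta>1 i (y0 i))" using xy by simp
    moreover have "(\<Sum>(i, j)\<in>E. \<theta>2 i j (x i) (x j)) = (\<Sum>(i, j)\<in>E. \<theta>2 i j (y0 i) (y0 j))"
      using xy Esub by (intro sum.cong) auto
    ultimately show ?thesis unfolding energy_def by simp
  qed
  show ?thesis unfolding is_MAP_def
  proof (intro conjI allI impI)
    fix i assume "i < n" then show "x i < d" using xa by blast
  next
    fix y assume y: "\<forall>i<n. y i < d"
    have "?c G0 \<le> ?c (ind n m y)" using opt0 ind_P[OF y] by blast
    then have "- energy n E \<theta>1 \<theta>2 y0 \<le> - energy n E \<theta>1 \<theta>2 y"
      using cost_ind[OF y0 m2 Esub] cost_ind[OF y m2 Esub] G0eq by simp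
    then show "energy n E \<theta>1 \<theta>2 y \<le> energy n E \<theta>1 \<theta>2 x" using energy_eq by simp
  qed
qed

end
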